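(* Let $a>b>0$ and $\lambda\ge 0$, and let $D_T$, $D_C$ be the subsets of the plane $\mathbb{R}^2(s,h)$ defined in the context. Put $$\Lambda(a,b)=\frac{a^6-33a^4b^2-33a^2b^4+b^6+(a^4+14a^2b^2+b^4)^{3/2}}{54a^2b^2}.$$ If $\lambda^4<\Lambda(a,b)$, then $D_T$ and $D_C$ have exactly two common points, and these are the points $(s,h)$ determined by $$(a^2-s^2)(s^2-b^2)-2\lambda^2s^3=0,\qquad s>0,\qquad h=\frac{2s^2-s\lambda^2+a^2+b^2}{2s}.$$ If $\lambda^4=\Lambda(a,b)$, these two points merge into a single point at which the curves $D_T$ and $D_C$ are tangent. If $\lambda^4>\Lambda(a,b)$, then $D_T$ and $D_C$ have no common points.
   Context: Parameters: $a>b>0$, $\lambda\ge 0$. Define $$F_C(s,h)=3s^4-2\Big(h-\frac{\lambda^2}{2}\Big)s^3+a^2b^2,\qquad F_T(s,h)=2s^2-2\Big(h+\frac{\lambda^2}{2}\Big)s+a^2+b^2.$$ Sets in the $(s,h)$-plane: $D_T=\{(s,h): F_T(s,h)=0,\ s>0,\ 2\lambda^2 s\le (a+b)^2\}$; $D_C=\{(s,h): F_C(s,h)=0,\ s\in\{-\sqrt{ab}\}\cup(0,s_*]\}$, where $s_*$ is the largest real root of the polynomial $$ \begin{aligned} \Phi_C(s)={}&[a^4b^4-6a^2b^2s^4+4(a^2+b^2)s^6-3s^8]^2\\ &+2[3a^6b^6+3a^4b^4s^4-20a^2b^2(a^2+b^2)s^6+57a^2b^2s^8-12(a^2+b^2)s^{10}+s^{12}]s^3\lambda^2\\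 &+4[3a^4b^4+15a^2b^2s^4-(a^2+b^2)s^6]s^6\lambda^4+8a^2b^2s^9\lambda^6 \end{aligned} $$ (such a root exists and is positive). *)

theory Defs
  imports "HOL-Analysis.Analysis"
begin

definition F_C :: "real \<Rightarrow> real \<Rightarrow> real \<Rightarrow> real \<Rightarrow> real \<Rightarrow> real" where
  "F_C a b lam s h = 3 * s^4 - 2 * (h - lam^2 / 2) * s^3 + a^2 * b^2"

definition F_T :: "real \<Rightarrow> real \<Rightarrow> real \<Rightarrow> real \<Rightarrow> real \<Rightarrow> real" where
  "F_T a b lam s h = 2 * s^2 - 2 * (h + lam^2 / 2) * s + a^2 + b^2"

definition Phi_C :: "real \<Rightarrow> real \<Rightarrow> real \<Rightarrow> real \<Rightarrow> real" where
  "Phi_C a b lam s =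
     (a^4* b^4 - 6* a^2* b^2* s^4 + 4* (a^2+b^2)* s^6 - 3* s^8)^2
   + 2* (3* a^6* b^6 + 3* a^4* b^4* s^4 - 20* a^2* b^2* (a^2+b^2)* s^6 + 57* a^2* b^2* s^8
        - 12* (a^2+b^2)* s^10 + s^12) * s^3 * lam^2
   + 4* (3* a^4* b^4 + 15* a^2* b^2* s^4 - (a^2+b^2)* s^6) * s^6 * lam^4
   + 8* a^2* b^2* s^9* lam^6"

text \<open>s_* : the largest real root of Phi_C (the context guarantees it exists and is positive).\<close>
definition s_star :: "real \<Rightarrow> real \<Rightarrow> real \<Rightarrow> real" where
  "s_star a b lam = Max {s. Phi_C a b lam s = 0}"

definition D_T :: "real \<Rightarrow> real \<Rightarrow> real \<Rightarrow> (real \<times> real) set" where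
  "D_T a b lam = {(s, h). F_T a b lam s h = 0 \<and> s > 0 \<and> 2 * lam^2 * s \<le> (a + b)^2}"

definition D_C :: "real \<Rightarrow> real \<Rightarrow> real \<Rightarrow> (real \<times> real) set" where
  "D_C a b lam = {(s, h). F_C a b lam s h = 0 \<and>
      (s = - sqrt (a * b) \<or> (0 < s \<and> s \<le> s_star a b lam))}"

definition Lambda :: "real \<Rightarrow> real \<Rightarrow> real" where
  "Lambda a b = (a^6 - 33* a^4* b^2 - 33* a^2* b^4 + b^6 + (a^4 + 14* a^2* b^2 + b^4) powr (3/2))
                 / (54 * a^2 * b^2)"

definition CommonSys :: "real \<Rightarrow> real \<Rightarrow> real \<Rightarrow> (real \<times> real) set" where
  "CommonSys a b lam = {(s, h). (a^2 - s^2) * (s^2 - b^2) - 2 * lam^2 * s^3 = 0 \<and> s > 0 \<and>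
      h = (2 * s^2 - s * lam^2 + a^2 + b^2) / (2 * s)}"

text \<open>For s > 0 the curves F_T = 0 and F_C = 0 are graphs h = hT(s), h = hC(s).\<close>
definition hT :: "real \<Rightarrow> real \<Rightarrow> real \<Rightarrow> real \<Rightarrow> real" where
  "hT a b lam s = (2 * s^2 + a^2 + b^2) / (2 * s) - lam^2 / 2"

definition hC :: "real \<Rightarrow> real \<Rightarrow> real \<Rightarrow> real \<Rightarrow> real" where
  "hC a b lam s = (3 * s^4 + a^2 * b^2) / (2 * s^3) + lam^2 / 2"

end

theory Submission
  imports Defs "HOL-Computational_Algebra.Polynomial" "HOL-Real_Asymp.Real_Asymp"
begin

definition Ap :: "real \<Rightarrow> real \<Rightarrow> real \<Rightarrow> real" where
 "Ap al be S = 3*al^3*be^3 + 3*al^2*be^2*S^2 - 20*al*be*(al+be)*S^3 + 57*al*be*S^4 - 12*(al+be)*S^5 + S^6"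
definition Bq :: "real \<Rightarrow> real \<Rightarrow> real \<Rightarrow> real" where
 "Bq al be S = 3*al^2*be^2 + 15*al*be*S^2 - (al+be)*S^3"
definition Qq :: "real \<Rightarrow> real \<Rightarrow> real \<Rightarrow> real" where
 "Qq al be S = al^2*be^2 - 6*al*be*S^2 + 4*(al+be)*S^3 - 3*S^4"
definition "ah (t::real) = (1+t)^3*(1+3*t)"
definition "bh (t::real) = (1+2*t)^3"
definition "sh (t::real) = (1+2*t)^2*(1+t)^2"
definition "Bplus (t::real) = 16 + t * (384 + t * (4248 + t * (28728 + t * (132789 + t * (444258 + t * (1110991 + t * (2113944 + t * (3084159 + t * (3447882 + t * (2926377 + t * (1848420 + t * (837916 + t * (254976 + t * (45168 + t * (2880)))))))))))))))"
definition "Epol (t::real) = 16 + t * (480 + t * (6804 + t * (60604 + t * (380479 + t * (1789932 + t * (6547927 + t * (19076090 + t * (44956545 + t * (86569822 + t * (136998079 + t * (178572384 + t * (191540512 + t * (168373922 + t * (120387990 + t * (69201046 + t * (31427344 + t * (10975944 + t * (2812128 + t * (478880 + t * (41280))))))))))))))))))))"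
lemma Q0: "Qq (ah t) (bh t) (sh t) = 0"
  unfolding Qq_def ah_def bh_def sh_def by algebra
lemma Ble_eq: "Bq (ah t) (bh t) (sh t) = Bplus t - 192 * t^16"
  unfolding Bq_def ah_def bh_def sh_def Bplus_def by algebra
lemma key_eq: "ah t * Ap (ah t) (bh t) (sh t) + Bplus t * (ah t - bh t)^2*(1+2*t)*(1+t)^4 + (sh t)^3*(ah t - bh t)^4 = - (t^8 * Epol t)"
  unfolding Ap_def ah_def bh_def sh_def Bplus_def Epol_def by algebra
lemma Bplus_nonneg: "t \<ge> 0 \<Longrightarrow> Bplus t \<ge> 0"
  unfolding Bplus_def by (intro add_nonneg_nonneg mult_nonneg_nonneg; simp)+
lemma Epol_nonneg: "t \<ge> 0 \<Longrightarrow> Epol t \<ge> 0"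
  unfolding Epol_def by (intro add_nonneg_nonneg mult_nonneg_nonneg; simp)+



lemma core_ineq:
  fixes t w n V :: real
  assumes t: "t > 0" and w: "w > 0" "w^2 = 1+2*t" and n: "0 \<le> n" "n \<le> V"
    and V: "V = (ah t - bh t)^2*(1+2*t)*(1+t)^3*w / ah t"
  shows "Ap (ah t) (bh t) (sh t) + n * Bq (ah t) (bh t) (sh t) + n^2*(ah t*bh t) \<le> 0"
proof -
  define al where "al = ah t"
  define be where "be = bh t"
  define A where "A = Ap (ah t) (bh t) (sh t)"
  define B where "B = Bq (ah t) (bh t) (sh t)"
  have al: "al > 0" unfolding al_def ah_def using t by simp
  have be: "be > 0" unfolding be_def bh_def using t by simp
  have Bp: "B \<le> Bplus t" unfolding B_def using Ble_eq[of t] t by simp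
  have Bp0: "Bplus t \<ge> 0" using Bplus_nonneg t by simp
  have w_le: "w \<le> 1 + t"
  proof -
    have "w^2 \<le> (1+t)^2" using w t by (simp add: power2_eq_square algebra_simps)
    from power2_le_imp_le[OF this] show ?thesis using t by simp
  qed
  have V0: "V \<ge> 0" unfolding V using w t by (simp add: ah_def)
  have alV: "al * V = (al - be)^2*(1+2*t)*(1+t)^3*w" unfolding V al_def be_def using al al_def by simp
  have step1: "al * (A + n*B + n^2*(al*be)) \<le> al*A + al*(n*Bplus t) + al^2*be*n^2"
  proof -
    have "n*B \<le> n*Bplus t" using Bp n by (simp add: mult_left_mono)
    thus ?thesis using al by (simp add: algebra_simps power2_eq_square mult_left_mono)
  qed
  have step2: "al*A + al*(n*Bplus t) + al^2*be*n^2 \<le> al*A + al*(V*Bplus t) + al^2*be*V^2"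
  proof -
    have "n*Bplus t \<le> V*Bplus t" using n Bp0 by (simp add: mult_right_mono)
    moreover have "n^2 \<le> V^2" using n by (simp add: power_mono)
    ultimately show ?thesis using al be
      by (simp add: add_mono mult_left_mono)
  qed
  have e1: "al*(V*Bplus t) = Bplus t*(al - be)^2*(1+2*t)*(1+t)^3*w"
  proof -
    have "al*(V*Bplus t) = (al*V)*Bplus t" by (simp only: mult_ac)
    also have "\<dots> = Bplus t*((al - be)^2*(1+2*t)*(1+t)^3*w)" unfolding alV by (simp only: mult_ac)
    finally show ?thesis by (simp only: mult_ac)
  qed
  have e2: "al^2*be*V^2 = (sh t)^3*(al-be)^4"
  proof -
    have "al^2*be*V^2 = be*(al*V)^2" by (simp add: power2_eq_square algebra_simps)
    also have "\<dots> = be*((al - be)^2*(1+2*t)*(1+t)^3)^2*w^2" unfolding alV by (simp add: power_mult_distrib)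
    also have "\<dots> = (sh t)^3*(al-be)^4" unfolding w(2) be_def bh_def sh_def by algebra
    finally show ?thesis .
  qed
  have step3: "Bplus t*(al - be)^2*(1+2*t)*(1+t)^3*w \<le> Bplus t*(al - be)^2*(1+2*t)*(1+t)^4"
  proof -
    have "0 \<le> Bplus t*(al - be)^2*(1+2*t)*(1+t)^3" using Bp0 t by simp
    from mult_left_mono[OF w_le this]
    have "Bplus t*(al - be)^2*(1+2*t)*(1+t)^3*w \<le> Bplus t*(al - be)^2*(1+2*t)*(1+t)^3*(1+t)" .
    also have "\<dots> = Bplus t*(al - be)^2*(1+2*t)*(1+t)^4" by algebra
    finally show ?thesis .
  qed
  have "al * (A + n*B + n^2*(al*be)) \<le> -(t^8 * Epol t)"
    using step1 step2 e1 e2 step3 key_eq[of t] unfolding A_def al_def be_def by linarith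
  also have "\<dots> \<le> 0" using Epol_nonneg[of t] t by simp
  finally have "al * (A + n*B + n^2*(al*be)) \<le> 0" .
  hence "A + n*B + n^2*(al*be) \<le> 0" using al by (simp add: mult_le_0_iff)
  thus ?thesis unfolding A_def B_def al_def be_def by simp
qed




lemma Ap_hom: "Ap (k*x) (k*y) (k*z) = k^6 * Ap x y z"
  unfolding Ap_def by algebra
lemma Bq_hom: "Bq (k*x) (k*y) (k*z) = k^4 * Bq x y z"
  unfolding Bq_def by algebra
lemma Qq_hom: "Qq (k*x) (k*y) (k*z) = k^4 * Qq x y z"
  unfolding Qq_def by algebra

lemma Phi_decomp:
  "Phi_C a b lam s = (Qq (a^2) (b^2) (s^2))^2 + (2*lam^2* s^3) * Ap (a^2) (b^2) (s^2)
     + (2*lam^2* s^3)^2 * Bq (a^2) (b^2) (s^2) + (2*lam^2* s^3)^3 * (a^2*b^2)"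
proof -
  have q: "a^4* b^4 - 6* a^2* b^2* s^4 + 4* (a^2+b^2)* s^6 - 3* s^8 = Qq (a^2) (b^2) (s^2)"
    unfolding Qq_def by (simp flip: power_mult)
  have A: "3* a^6* b^6 + 3* a^4* b^4* s^4 - 20* a^2* b^2* (a^2+b^2)* s^6 + 57* a^2* b^2* s^8
        - 12* (a^2+b^2)* s^10 + s^12 = Ap (a^2) (b^2) (s^2)"
    unfolding Ap_def by (simp flip: power_mult)
  have B: "3* a^4* b^4 + 15* a^2* b^2* s^4 - (a^2+b^2)* s^6 = Bq (a^2) (b^2) (s^2)"
    unfolding Bq_def by (simp flip: power_mult)
  show ?thesis unfolding Phi_C_def q A B
    by algebra
qed

lemma root_props:
  fixes a b lam s :: real
  assumes ab: "a > b" "b > 0" and s: "s > 0" and g: "(a^2 - s^2)*(s^2 - b^2) - 2*lam^2* s^3 = 0"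
  shows "b \<le> s \<and> s \<le> a \<and> 2*lam^2* s \<le> (a-b)^2 \<and> 2*lam^2*a^2*b \<le> (a^2-b^2)^2"
proof -
  have prod: "(a^2 - s^2)*(s^2 - b^2) = 2*lam^2* s^3" using g by simp
  have p0: "(a^2 - s^2)*(s^2 - b^2) \<ge> 0" unfolding prod using s by simp
  have sa: "s \<le> a"
  proof (rule ccontr)
    assume "\<not> s \<le> a"
    hence "a < s" by simp
    hence "a^2 < s^2" "b^2 < s^2" using ab by (auto intro: power_strict_mono)
    hence "(a^2 - s^2)*(s^2 - b^2) < 0" by (simp add: mult_neg_pos)
    thus False using p0 by simp
  qed
  have bs: "b \<le> s"
  proof (rule ccontr)
    assume "\<not> b \<le> s"
    hence "s < b" by simp
    hence "s^2 < b^2" "s^2 < a^2" using ab s by (auto intro: power_strict_mono)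
    hence "(a^2 - s^2)*(s^2 - b^2) < 0" by (simp add: mult_pos_neg)
    thus False using p0 by simp
  qed
  have idn: "(a-b)^2* s^2 - (a^2 - s^2)*(s^2 - b^2) = (s^2 - a*b)^2" by algebra
  have "2*lam^2* s^3 \<le> (a-b)^2* s^2" using idn prod by (metis diff_ge_0_iff_ge zero_le_power2)
  hence "(2*lam^2* s)* s^2 \<le> (a-b)^2* s^2" by (simp add: power3_eq_cube power2_eq_square algebra_simps)
  hence l1: "2*lam^2* s \<le> (a-b)^2" using s by simp
  have "2*lam^2*b \<le> 2*lam^2* s" using bs by (simp add: mult_left_mono)
  hence "2*lam^2*b \<le> (a-b)^2" using l1 by simp
  hence "a^2*(2*lam^2*b) \<le> a^2*(a-b)^2" by (simp add: mult_left_mono)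
  also have "\<dots> \<le> (a+b)^2*(a-b)^2" using ab by (intro mult_right_mono power_mono) auto
  also have "\<dots> = (a^2-b^2)^2" by algebra
  finally have "2*lam^2*a^2*b \<le> (a^2-b^2)^2" by (simp add: algebra_simps)
  thus ?thesis using sa bs l1 by simp
qed

lemma param_exists:
  fixes a b :: real
  assumes ab: "a > b" "b > 0"
  shows "\<exists>t>0. b^2 * ah t = a^2 * bh t"
proof -
  define f where "f t = b^2 * ah t - a^2 * bh t" for t
  define T where "T = 8*a^2/(3*b^2)"
  have T0: "T > 0" unfolding T_def using ab by simp
  have f0: "f 0 < 0" unfolding f_def ah_def bh_def using ab by (simp add: power_strict_mono)
  have fT: "f T \<ge> 0"
  proof -
    have h1: "(1+2*T)^3 \<le> 8*(1+T)^3"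
    proof -
      have "(1+2*T)^3 \<le> (2*(1+T))^3" using T0 by (intro power_mono) auto
      moreover have "(2*(1+T))^3 = 8*(1+T)^3" by algebra
      ultimately show ?thesis by simp
    qed
    have h2: "b^2*(1+3*T) = b^2 + 8*a^2" unfolding T_def using ab by (simp add: field_simps)
    have "a^2 * bh T \<le> a^2 * (8*(1+T)^3)" unfolding bh_def using h1 by (intro mult_left_mono) auto
    also have "\<dots> = (8*a^2)*(1+T)^3" by simp
    also have "\<dots> \<le> (b^2 + 8*a^2)*(1+T)^3" using T0 by (intro mult_right_mono) auto
    also have "\<dots> = b^2 * ah T" unfolding ah_def h2[symmetric] by (simp add: algebra_simps)
    finally show ?thesis unfolding f_def by simp
  qed
  have cont: "continuous_on {0..T} f" unfolding f_def ah_def bh_def by (intro continuous_intros)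
  obtain t where t: "0 \<le> t" "t \<le> T" "f t = 0" using IVT'[of f 0 0 T, OF _ fT _ cont] f0 T0 by auto
  have "t \<noteq> 0" using t f0 by auto
  hence "t > 0" using t by simp
  moreover have "b^2 * ah t = a^2 * bh t" using t unfolding f_def by simp
  ultimately show ?thesis by blast
qed




lemma e1_lem:
  fixes r x w t lam :: real
  assumes "r > 0"
  shows "(2*lam^2*(r*(1+2*t)*(1+t))^3/r^4) * (r*x*w) = (2*lam^2*x*(1+2*t)*w)*((1+2*t)^2*(1+t)^3)"
proof -
  have "(r*(1+2*t)*(1+t))^3 = r^3*((1+2*t)^3*(1+t)^3)" by (simp add: power_mult_distrib)
  moreover have "r^3 * r / r^4 = 1" using assms by (simp add: power3_eq_cube power4_eq_xxxx)
  ultimately show ?thesis by (simp add: field_simps power2_eq_square power3_eq_cube)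
qed

lemma e2_lem:
  fixes r x y w t :: real
  assumes "x > 0" "w^2 = 1+2*t"
  shows "((x - y)^2*(1+2*t)*(1+t)^3*w / x) * (r*x*w) = (r*(x - y)^2) * ((1+2*t)^2*(1+t)^3)"
proof -
  have "((x - y)^2*(1+2*t)*(1+t)^3*w / x) * (r*x*w) = (x - y)^2*(1+2*t)*(1+t)^3*w^2*r"
    using assms by (simp add: power2_eq_square)
  also have "\<dots> = (r*(x - y)^2) * ((1+2*t)^2*(1+t)^3)" unfolding assms(2) by (simp add: power2_eq_square)
  finally show ?thesis .
qed

lemma fin_eq2:
  fixes r n A B x y :: real
  shows "(r^4 * n) * ((r^2)^6 * A) + (r^4 * n)^2 * ((r^2)^4 * B) + (r^4 * n)^3 * ((r^2 * x)*(r^2 * y))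
     = r^16 * n * (A + n * B + n^2*(x*y))"
  by algebra
lemma phi_point:
  fixes a b lam s :: real
  assumes ab: "a > b" "b > 0" and s: "s > 0" and g: "(a^2 - s^2)*(s^2 - b^2) - 2*lam^2* s^3 = 0"
  shows "\<exists>p\<ge>s. Phi_C a b lam p \<le> 0"
proof -
  from root_props[OF ab s g] have sa: "s \<le> a" and mu: "2*lam^2*a^2*b \<le> (a^2-b^2)^2" by auto
  obtain t where t: "t > 0" and ht: "b^2 * ah t = a^2 * bh t" using param_exists[OF ab] by auto
  define w where "w = sqrt (1+2*t)"
  have w0: "w > 0" unfolding w_def using t by simp
  have w2: "w^2 = 1+2*t" unfolding w_def using t by simp
  define r where "r = b/((1+2*t)*w)"
  have r0: "r > 0" unfolding r_def using ab t w0 by simp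
  have hb: "b = r*(1+2*t)*w" unfolding r_def using t w0 by simp
  have ah0: "ah t > 0" unfolding ah_def using t by simp
  have bh0: "bh t > 0" unfolding bh_def using t by simp
  have hbb: "b^2 = r^2 * bh t"
  proof -
    have "b^2 = r^2*(1+2*t)^2*w^2" unfolding hb by (simp add: power_mult_distrib)
    also have "\<dots> = r^2 * bh t" unfolding w2 bh_def by (simp add: power2_eq_square power3_eq_cube)
    finally show ?thesis .
  qed
  have haa: "a^2 = r^2 * ah t"
  proof -
    have "a^2 * bh t = b^2 * ah t" using ht by simp
    also have "\<dots> = (r^2 * ah t) * bh t" unfolding hbb by (simp add: mult_ac)
    finally have eq: "a^2 * bh t = (r^2 * ah t) * bh t" .
    show ?thesis using eq bh0 by (metis mult_right_cancel less_irrefl)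
  qed
  define p where "p = r*(1+2*t)*(1+t)"
  have p0: "p > 0" unfolding p_def using r0 t by simp
  have hpp: "p^2 = r^2 * sh t" unfolding p_def sh_def by (simp add: power_mult_distrib)
  have ash: "ah t \<le> sh t"
  proof -
    have "sh t - ah t = (1+t)^2 * t^2" unfolding sh_def ah_def by algebra
    thus ?thesis by (metis diff_ge_0_iff_ge zero_le_mult_iff zero_le_power2)
  qed
  have ap: "a \<le> p"
  proof -
    have "a^2 \<le> p^2" unfolding haa hpp using ash by (simp add: mult_left_mono)
    from power2_le_imp_le[OF this] show ?thesis using p0 by simp
  qed
  define n where "n = 2*lam^2*p^3/r^4"
  have n0: "n \<ge> 0" unfolding n_def using p0 r0 by simp
  define V where "V = (ah t - bh t)^2*(1+2*t)*(1+t)^3*w / ah t"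
  have keymu: "2*lam^2 * ah t * (1+2*t) * w \<le> r*(ah t - bh t)^2"
  proof -
    have "(2*lam^2 * ah t * (1+2*t) * w) * r^3 = 2*lam^2*a^2*b"
      unfolding haa hb by (simp add: power2_eq_square power3_eq_cube algebra_simps)
    also have "\<dots> \<le> (a^2-b^2)^2" by (rule mu)
    also have "\<dots> = (r*(ah t - bh t)^2) * r^3" unfolding haa hbb
      by (simp add: power2_eq_square power3_eq_cube algebra_simps)
    finally show ?thesis using r0 by simp
  qed
  have nV: "n \<le> V"
  proof -
    have e1: "n * (r * ah t * w) = (2*lam^2 * ah t * (1+2*t) * w) * ((1+2*t)^2*(1+t)^3)"
      unfolding n_def p_def using e1_lem[OF r0] .
    have e2: "V * (r * ah t * w) = (r*(ah t - bh t)^2) * ((1+2*t)^2*(1+t)^3)"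
      unfolding V_def by (rule e2_lem[OF ah0 w2])
    have "n * (r * ah t * w) \<le> V * (r * ah t * w)" unfolding e1 e2
      using keymu t by (intro mult_right_mono) auto
    moreover have "r * ah t * w > 0" using r0 ah0 w0 by simp
    ultimately show ?thesis by (rule mult_right_le_imp_le)
  qed
  have core: "Ap (ah t) (bh t) (sh t) + n * Bq (ah t) (bh t) (sh t) + n^2*(ah t*bh t) \<le> 0"
    by (rule core_ineq[OF t w0 w2 n0 nV V_def])
  have nu: "2*lam^2*p^3 = r^4 * n" unfolding n_def using r0 by simp
  have "Phi_C a b lam p = r^16 * n * (Ap (ah t) (bh t) (sh t) + n * Bq (ah t) (bh t) (sh t) + n^2*(ah t*bh t))"
  proof -
    have "Phi_C a b lam p = (Qq (r^2 * ah t) (r^2 * bh t) (r^2 * sh t))^2 + (r^4 * n) * Ap (r^2 * ah t) (r^2 * bh t) (r^2 * sh t)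
     + (r^4 * n)^2 * Bq (r^2 * ah t) (r^2 * bh t) (r^2 * sh t) + (r^4 * n)^3 * ((r^2 * ah t)*(r^2 * bh t))"
      unfolding Phi_decomp nu haa hbb hpp ..
    also have "\<dots> = r^16 * n * (Ap (ah t) (bh t) (sh t) + n * Bq (ah t) (bh t) (sh t) + n^2*(ah t*bh t))"
      unfolding Qq_hom Ap_hom Bq_hom Q0 using fin_eq2 by simp
    finally show ?thesis .
  qed
  also have "\<dots> \<le> 0" using core n0 r0 by (simp add: mult_nonneg_nonpos)
  finally show ?thesis using sa ap by (intro exI[of _ p]) auto
qed





lemma Phi_poly:
  fixes a b lam :: real
  assumes "a \<noteq> 0" "b \<noteq> 0"
  shows "\<exists>P. (\<forall>x. poly P x = Phi_C a b lam x) \<and> P \<noteq> 0"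
proof -
  define X :: "real poly" where "X = [:0,1:]"
  define P where "P = ([:a^4* b^4:] - [:6* a^2* b^2:]* X^4 + [:4* (a^2+b^2):]* X^6 - [:3:]* X^8)^2
   + [:2:]* ([:3* a^6* b^6:] + [:3* a^4* b^4:]* X^4 - [:20* a^2* b^2* (a^2+b^2):]* X^6 + [:57* a^2* b^2:]* X^8
        - [:12* (a^2+b^2):]* X^10 + X^12) * X^3 * [:lam^2:]
   + [:4:]* ([:3* a^4* b^4:] + [:15* a^2* b^2:]* X^4 - [:a^2+b^2:]* X^6) * X^6 * [:lam^4:]
   + [:8* a^2* b^2:]* X^9* [:lam^6:]"
  have ev: "poly P x = Phi_C a b lam x" for x
    unfolding P_def X_def Phi_C_def by (simp only: poly_add poly_diff poly_mult poly_power poly_pCons poly_0 mult_zero_right add_0_right add_0_left mult_1_right)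
  have "poly P 0 \<noteq> 0" unfolding ev Phi_C_def using assms by simp
  hence "P \<noteq> 0" by auto
  thus ?thesis using ev by blast
qed

lemma s_le_sstar:
  fixes a b lam s :: real
  assumes ab: "a > b" "b > 0" and s: "s > 0" and g: "(a^2 - s^2)*(s^2 - b^2) - 2*lam^2 * s^3 = 0"
  shows "s \<le> s_star a b lam"
proof -
  obtain p where p: "p \<ge> s" "Phi_C a b lam p \<le> 0" using phi_point[OF ab s g] by auto
  have lim: "filterlim (\<lambda>x. Phi_C a b lam x) at_top at_top"
    unfolding Phi_C_def by real_asymp
  hence "eventually (\<lambda>x. 0 \<le> Phi_C a b lam x) at_top" by (simp add: filterlim_at_top)
  then obtain R where R: "\<And>x. x \<ge> R \<Longrightarrow> 0 \<le> Phi_C a b lam x" unfolding eventually_at_top_linorder by auto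
  define R' where "R' = max R p"
  have R'1: "0 \<le> Phi_C a b lam R'" using R unfolding R'_def by simp
  have R'2: "p \<le> R'" unfolding R'_def by simp
  have cont: "continuous_on {p..R'} (\<lambda>x. Phi_C a b lam x)"
    unfolding Phi_C_def by (intro continuous_intros)
  obtain r where r: "p \<le> r" "r \<le> R'" "Phi_C a b lam r = 0"
    using IVT'[of "\<lambda>x. Phi_C a b lam x" p 0 R', OF p(2) R'1 R'2 cont] by auto
  obtain P where P: "\<And>x. poly P x = Phi_C a b lam x" "P \<noteq> 0"
    using Phi_poly[of a b lam] ab by auto
  have "{x. Phi_C a b lam x = 0} = {x. poly P x = 0}" using P by simp
  hence fin: "finite {x. Phi_C a b lam x = 0}" using poly_roots_finite[OF P(2)] by simp
  have "r \<le> s_star a b lam" unfolding s_star_def using fin r by (intro Max_ge) auto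
  thus ?thesis using p r by simp
qed




definition psi :: "real \<Rightarrow> real \<Rightarrow> real \<Rightarrow> real" where
  "psi a b s = (a^2 - s^2)*(s^2 - b^2)/s^3"

lemma psi_diff:
  fixes a b s t :: real
  assumes "s > 0" "t > 0"
  shows "psi a b t - psi a b s = (t - s)*(a^2*b^2*(t^2+t* s+s^2) - (a^2+b^2)* s^2*t^2 - s^3*t^3)/(t^3* s^3)"
proof -
  have e: "(a^2-t^2)*(t^2-b^2)* s^3 - (a^2-s^2)*(s^2-b^2)*t^3
      = (t - s)*(a^2*b^2*(t^2+t* s+s^2) - (a^2+b^2)* s^2*t^2 - s^3*t^3)" by algebra
  show ?thesis unfolding psi_def using assms by (simp add: diff_frac_eq e)
qed

lemma K_pos:
  fixes s t x sg p :: real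
  assumes s: "0 < s" "s < t" and tx: "t^2 \<le> x" and x: "x > 0" and p: "p > 0"
    and xe: "x*(sg + x) = 3*p"
  shows "p*(t^2+t* s+s^2) - sg* s^2*t^2 - s^3*t^3 > 0"
proof -
  have st: "s*t < x"
  proof -
    have "s*t < t*t" using s by (intro mult_strict_right_mono) auto
    thus ?thesis using tx by (simp add: power2_eq_square)
  qed
  have ss: "s^2 < x"
  proof -
    have "s^2 < t^2" using s by (intro power_strict_mono) auto
    thus ?thesis using tx by simp
  qed
  have stp: "s^2*t^2 > 0" using s by simp
  have A1: "s^2*t^2*(sg + s*t) < s^2*t^2*(sg + x)" using st stp by (intro mult_strict_left_mono) auto
  have A3: "(t^2+t* s+s^2)*x \<ge> 3*(s^2*t^2)"
  proof -
    have "t^2*x \<ge> t^2* s^2" using ss by (intro mult_left_mono) auto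
    moreover have "t* s*x \<ge> t* s*(s*t)" using st s by (intro mult_left_mono) auto
    moreover have "s^2*x \<ge> s^2*t^2" using tx by (intro mult_left_mono) auto
    ultimately show ?thesis by (simp add: power2_eq_square algebra_simps)
  qed
  have "(p*(t^2+t* s+s^2) - sg* s^2*t^2 - s^3*t^3)*x = p*((t^2+t* s+s^2)*x) - (s^2*t^2*(sg + s*t))*x"
    by (simp add: power2_eq_square power3_eq_cube algebra_simps)
  also have "\<dots> > p*(3*(s^2*t^2)) - (s^2*t^2*(sg + x))*x"
  proof -
    have "p*((t^2+t* s+s^2)*x) \<ge> p*(3*(s^2*t^2))" using A3 p by (intro mult_left_mono) auto
    moreover have "(s^2*t^2*(sg + s*t))*x < (s^2*t^2*(sg + x))*x" using A1 x by (intro mult_strict_right_mono) auto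
    ultimately show ?thesis by linarith
  qed
  also have "p*(3*(s^2*t^2)) - (s^2*t^2*(sg + x))*x = 0"
  proof -
    have "(s^2*t^2*(sg + x))*x = (s^2*t^2)*(x*(sg+x))" by (simp only: mult_ac)
    also have "\<dots> = (s^2*t^2)*(3*p)" by (simp only: xe)
    finally show ?thesis by algebra
  qed
  finally show ?thesis using x by (simp add: zero_less_mult_iff)
qed

lemma K_neg:
  fixes s t x sg p :: real
  assumes s: "x \<le> s^2" "s < t" "0 < s" and x: "x > 0" and p: "p > 0"
    and xe: "x*(sg + x) = 3*p"
  shows "p*(t^2+t* s+s^2) - sg* s^2*t^2 - s^3*t^3 < 0"
proof -
  have t0: "t > 0" using s by simp
  have st: "s*t > x"
  proof -
    have "s* s < s*t" using s by (intro mult_strict_left_mono) auto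
    thus ?thesis using s(1) unfolding power2_eq_square by linarith
  qed
  have tt: "t^2 > x"
  proof -
    have "s^2 < t^2" using s by (intro power_strict_mono) auto
    thus ?thesis using s by simp
  qed
  have stp: "s^2*t^2 > 0" using s by simp
  have A1: "s^2*t^2*(sg + s*t) > s^2*t^2*(sg + x)" using st stp by (intro mult_strict_left_mono) auto
  have A3: "(t^2+t* s+s^2)*x \<le> 3*(s^2*t^2)"
  proof -
    have "t^2*x \<le> t^2* s^2" using s by (intro mult_left_mono) auto
    moreover have "t* s*x \<le> t* s*(s*t)" using st s t0 by (intro mult_left_mono) auto
    moreover have "s^2*x \<le> s^2*t^2" using tt by (intro mult_left_mono) auto
    ultimately show ?thesis by (simp add: power2_eq_square algebra_simps)
  qed
  have "(p*(t^2+t* s+s^2) - sg* s^2*t^2 - s^3*t^3)*x = p*((t^2+t* s+s^2)*x) - (s^2*t^2*(sg + s*t))*x"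
    by (simp add: power2_eq_square power3_eq_cube algebra_simps)
  also have "\<dots> < p*(3*(s^2*t^2)) - (s^2*t^2*(sg + x))*x"
  proof -
    have "p*((t^2+t* s+s^2)*x) \<le> p*(3*(s^2*t^2))" using A3 p by (intro mult_left_mono) auto
    moreover have "(s^2*t^2*(sg + s*t))*x > (s^2*t^2*(sg + x))*x" using A1 x by (intro mult_strict_right_mono) auto
    ultimately show ?thesis by linarith
  qed
  also have "p*(3*(s^2*t^2)) - (s^2*t^2*(sg + x))*x = 0"
  proof -
    have "(s^2*t^2*(sg + x))*x = (s^2*t^2)*(x*(sg+x))" by (simp only: mult_ac)
    also have "\<dots> = (s^2*t^2)*(3*p)" by (simp only: xe)
    finally show ?thesis by algebra
  qed
  finally show ?thesis using x by (simp add: mult_less_0_iff)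
qed




locale ab_setup =
  fixes a b :: real
  assumes ab: "a > b" "b > 0"
begin

definition "sg = a^2 + b^2"
definition "pp = a^2 * b^2"
definition "yy = sqrt (a^4 + 14*a^2*b^2 + b^4)"
definition "xc = (yy - sg)/2"
definition "sc = sqrt xc"

lemma pp_pos: "pp > 0" unfolding pp_def using ab by simp
lemma sg_pos: "sg > 0" unfolding sg_def using ab by (intro add_pos_pos) auto

lemma yy_sq: "yy^2 = sg^2 + 12*pp"
proof -
  have "a^4 + 14*a^2*b^2 + b^4 \<ge> 0" by simp
  hence "yy^2 = a^4 + 14*a^2*b^2 + b^4" unfolding yy_def by simp
  thus ?thesis unfolding sg_def pp_def by algebra
qed

lemma yy_gt: "yy > sg"
proof -
  have "sg^2 < yy^2" using yy_sq pp_pos by simp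
  moreover have "yy \<ge> 0" unfolding yy_def by simp
  ultimately show ?thesis using sg_pos by (smt (verit) power_mono)
qed

lemma xc_pos: "xc > 0" unfolding xc_def using yy_gt by simp
lemma xc_eq: "xc*(sg + xc) = 3*pp"
proof -
  have "xc*(sg + xc) = (yy^2 - sg^2)/4" unfolding xc_def by (simp add: power2_eq_square field_simps)
  thus ?thesis using yy_sq by simp
qed
lemma sc_pos: "sc > 0" unfolding sc_def using xc_pos by simp
lemma sc_sq: "sc^2 = xc" unfolding sc_def using xc_pos by simp

lemma psi_inc:
  assumes "0 < s" "s < t" "t \<le> sc"
  shows "psi a b s < psi a b t"
proof -
  have t2: "t^2 \<le> xc" using assms sc_sq by (metis power_mono less_imp_le order_less_trans)
  have K: "pp*(t^2+t* s+s^2) - sg* s^2*t^2 - s^3*t^3 > 0"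
    using K_pos[OF assms(1,2) t2 xc_pos pp_pos xc_eq] .
  have "psi a b t - psi a b s = (t - s)*(pp*(t^2+t* s+s^2) - sg* s^2*t^2 - s^3*t^3)/(t^3* s^3)"
    using psi_diff[of s t a b] assms unfolding pp_def sg_def by simp
  also have "\<dots> > 0" using K assms by simp
  finally show ?thesis by simp
qed

lemma psi_dec:
  assumes "sc \<le> s" "s < t"
  shows "psi a b t < psi a b s"
proof -
  have s0: "s > 0" using assms sc_pos by simp
  have s2: "xc \<le> s^2" using assms sc_sq sc_pos by (metis power_mono less_imp_le)
  have K: "pp*(t^2+t* s+s^2) - sg* s^2*t^2 - s^3*t^3 < 0"
    using K_neg[OF s2 assms(2) s0 xc_pos pp_pos xc_eq] .
  have "psi a b t - psi a b s = (t - s)*(pp*(t^2+t* s+s^2) - sg* s^2*t^2 - s^3*t^3)/(t^3* s^3)"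
    using psi_diff[of s t a b] assms s0 unfolding pp_def sg_def by simp
  also have "\<dots> < 0" using K assms s0 by (simp add: mult_pos_neg divide_neg_pos)
  finally show ?thesis by simp
qed

lemma psi_max:
  assumes "s > 0" "s \<noteq> sc"
  shows "psi a b s < psi a b sc"
proof (cases "s < sc")
  case True thus ?thesis using psi_inc[OF assms(1) True] by simp
next
  case False hence "sc < s" using assms by simp
  thus ?thesis using psi_dec[of sc s] by simp
qed

lemma psi_inj_left:
  assumes "0 < s" "s \<le> sc" "0 < t" "t \<le> sc" "psi a b s = psi a b t"
  shows "s = t"
  using psi_inc[of s t] psi_inc[of t s] assms by (cases s t rule: linorder_cases) auto

lemma psi_inj_right:
  assumes "sc \<le> s" "sc \<le> t" "psi a b s = psi a b t"
  shows "s = t"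
  using psi_dec[of s t] psi_dec[of t s] assms by (cases s t rule: linorder_cases) auto

lemma psi_b: "psi a b b = 0" unfolding psi_def by simp
lemma psi_a: "psi a b a = 0" unfolding psi_def by simp

lemma b_sc_a: "b < sc \<and> sc < a"
proof -
  have "b < sc"
  proof (rule ccontr)
    assume "\<not> b < sc"
    hence "sc \<le> b" by simp
    from psi_dec[OF this ab(1)] show False using psi_a psi_b by simp
  qed
  moreover have "sc < a"
  proof (rule ccontr)
    assume "\<not> sc < a"
    hence "a \<le> sc" by simp
    from psi_inc[OF ab(2) ab(1) this] show False using psi_a psi_b by simp
  qed
  ultimately show ?thesis by simp
qed

lemma M_pos: "psi a b sc > 0"
  using psi_max[of b] ab b_sc_a psi_b by simp

lemma psi_cont: "0 < u \<Longrightarrow> continuous_on {u..v} (psi a b)"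
  unfolding psi_def by (intro continuous_intros) auto

lemma powr_32: "x > 0 \<Longrightarrow> x powr (3/2) = sqrt x ^ 3"
proof -
  assume x: "x > 0"
  have "x powr (3/2) = (x powr (1/2)) powr 3" by (simp add: powr_powr)
  also have "\<dots> = (x powr (1/2)) ^ 3" using x by (subst powr_realpow[symmetric]) auto
  also have "\<dots> = sqrt x ^ 3" using x by (simp add: powr_half_sqrt)
  finally show ?thesis .
qed

lemma Lambda_eq: "Lambda a b = (psi a b sc)^2 / 4"
proof -
  have D: "a^4 + 14*a^2*b^2 + b^4 > 0" using ab by (simp add: add_pos_pos)
  have L: "Lambda a b = (sg^3 - 36*pp * sg + yy^3)/(54*pp)"
  proof -
    have n: "a^6 - 33* a^4* b^2 - 33* a^2* b^4 + b^6 = sg^3 - 36*pp * sg"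
      unfolding sg_def pp_def by algebra
    have "Lambda a b = (sg^3 - 36*pp * sg + yy^3)/(54 * a^2 * b^2)"
      unfolding Lambda_def powr_32[OF D] yy_def[symmetric] n ..
    thus ?thesis unfolding pp_def by (simp add: mult.assoc)
  qed
  have num: "(a^2 - sc^2)*(sc^2 - b^2) = 2* sg*xc - 4*pp"
    unfolding sc_sq using xc_eq unfolding sg_def pp_def by (simp add: algebra_simps power2_eq_square)
  have sc6: "sc^6 = xc^3"
  proof -
    have "sc^6 = (sc^2)^3" by (simp flip: power_mult)
    thus ?thesis using sc_sq by simp
  qed
  have M2: "(psi a b sc)^2 = (2 * sg * xc - 4 * pp)^2 / xc^3"
    unfolding psi_def num[symmetric] by (simp add: power_divide sc6)
  have M3: "(psi a b sc)^2/4 = (sg * xc - 2 * pp)^2 / xc^3"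
  proof -
    have "(2 * sg * xc - 4 * pp)^2 = 4 * (sg * xc - 2 * pp)^2" by algebra
    thus ?thesis using M2 by simp
  qed
  have I: "(sg^3 - 36 * pp * sg + yy^3) * xc^3 = 54 * pp * (sg * xc - 2 * pp)^2"
  proof -
    have p: "pp = (yy^2 - sg^2)/12" using yy_sq by simp
    show ?thesis unfolding p xc_def by (simp add: divide_simps) algebra
  qed
  have L2: "(sg^3 - 36 * pp * sg + yy^3)/(54 * pp) = (sg * xc - 2 * pp)^2 / xc^3"
    using I xc_pos pp_pos by (simp add: divide_simps mult.commute)
  show ?thesis unfolding L L2 M3 ..
qed

end



definition Hf :: "real \<Rightarrow> real \<Rightarrow> real \<Rightarrow> real \<Rightarrow> real" where
  "Hf a b lam s = (2 * s^2 - s * lam^2 + a^2 + b^2) / (2 * s)"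

lemma FT_FC_iff:
  fixes a b lam s h :: real
  assumes s: "s \<noteq> 0"
  shows "(F_T a b lam s h = 0 \<and> F_C a b lam s h = 0) \<longleftrightarrow>
         (h = Hf a b lam s \<and> (a^2 - s^2) * (s^2 - b^2) - 2 * lam^2 * s^3 = 0)"
proof -
  have T: "F_T a b lam s h = 0 \<longleftrightarrow> h = Hf a b lam s"
  proof -
    have "F_T a b lam s h = (2 * s^2 - s * lam^2 + a^2 + b^2) - 2 * s * h"
      unfolding F_T_def by (simp add: algebra_simps)
    thus ?thesis unfolding Hf_def using s by (auto simp: field_simps)
  qed
  have C: "F_C a b lam s (Hf a b lam s) = - ((a^2 - s^2) * (s^2 - b^2) - 2 * lam^2 * s^3)"
  proof -
    have e: "2 * Hf a b lam s * s^3 = (2 * s^2 - s * lam^2 + a^2 + b^2) * s^2"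
      unfolding Hf_def using s by (simp add: field_simps power2_eq_square power3_eq_cube)
    have "F_C a b lam s (Hf a b lam s) = 3 * s^4 - 2 * Hf a b lam s * s^3 + lam^2 * s^3 + a^2 * b^2"
      unfolding F_C_def by (simp add: algebra_simps)
    also have "\<dots> = 3 * s^4 - (2 * s^2 - s * lam^2 + a^2 + b^2) * s^2 + lam^2 * s^3 + a^2 * b^2"
      unfolding e ..
    also have "\<dots> = - ((a^2 - s^2) * (s^2 - b^2) - 2 * lam^2 * s^3)" by algebra
    finally show ?thesis .
  qed
  show ?thesis using T C by auto
qed

lemma DD_eq:
  fixes a b lam :: real
  assumes ab: "a > b" "b > 0"
  shows "D_T a b lam \<inter> D_C a b lam = CommonSys a b lam"
proof (intro equalityI subsetI)
  fix z assume z: "z \<in> D_T a b lam \<inter> D_C a b lam"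
  obtain s h where zz: "z = (s, h)" by fastforce
  have s: "s > 0" and FT: "F_T a b lam s h = 0" and FC: "F_C a b lam s h = 0"
    using z unfolding zz D_T_def D_C_def by auto
  from FT_FC_iff[of s a b lam h] s FT FC show "z \<in> CommonSys a b lam"
    unfolding zz CommonSys_def Hf_def by auto
next
  fix z assume z: "z \<in> CommonSys a b lam"
  obtain s h where zz: "z = (s, h)" by fastforce
  have s: "s > 0" and g: "(a^2 - s^2) * (s^2 - b^2) - 2 * lam^2 * s^3 = 0" and h: "h = Hf a b lam s"
    using z unfolding zz CommonSys_def Hf_def by auto
  have FF: "F_T a b lam s h = 0 \<and> F_C a b lam s h = 0" using FT_FC_iff[of s a b lam h] s g h by auto
  from root_props[OF ab s g] have l: "2 * lam^2 * s \<le> (a-b)^2" by auto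
  have "(a-b)^2 \<le> (a+b)^2" using ab by (intro power_mono) auto
  hence l2: "2 * lam^2 * s \<le> (a+b)^2" using l by simp
  have ss: "s \<le> s_star a b lam" using s_le_sstar[OF ab s g] .
  show "z \<in> D_T a b lam \<inter> D_C a b lam"
    unfolding zz D_T_def D_C_def using FF s l2 ss by auto
qed

lemma g_psi:
  fixes a b lam s :: real
  assumes "s > 0"
  shows "(a^2 - s^2) * (s^2 - b^2) - 2 * lam^2 * s^3 = 0 \<longleftrightarrow> psi a b s = 2 * lam^2"
  unfolding psi_def using assms by (auto simp: field_simps)

lemma CommonSys_alt:
  "CommonSys a b lam = (\<lambda>s. (s, Hf a b lam s)) ` {s. s > 0 \<and> psi a b s = 2 * lam^2}"
  unfolding CommonSys_def Hf_def using g_psi by auto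

lemma tangency:
  fixes a b lam s0 :: real
  assumes s0: "s0 > 0" and cr: "s0^2 * ((a^2 + b^2) + s0^2) = 3 * (a^2 * b^2)"
  shows "\<exists>d. (hT a b lam has_real_derivative d) (at s0) \<and> (hC a b lam has_real_derivative d) (at s0)"
proof -
  have eT: "hT a b lam = (\<lambda>s. (2 * s^2 + a^2 + b^2) / (2 * s) - lam^2 / 2)"
    by (rule ext) (simp add: hT_def)
  have eC: "hC a b lam = (\<lambda>s. (3 * s^4 + a^2 * b^2) / (2 * s^3) + lam^2 / 2)"
    by (rule ext) (simp add: hC_def)
  have dT: "(hT a b lam has_real_derivative (1 - (a^2 + b^2) / (2 * s0^2))) (at s0)"
    unfolding eT using s0 by (auto intro!: derivative_eq_intros simp: field_simps power2_eq_square)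
  have dC: "(hC a b lam has_real_derivative (3/2 - 3 * (a^2 * b^2) / (2 * s0^4))) (at s0)"
    unfolding eC using s0 by (auto intro!: derivative_eq_intros simp: field_simps power2_eq_square power3_eq_cube power4_eq_xxxx)
  have eq: "1 - (a^2 + b^2) / (2 * s0^2) = 3/2 - 3 * (a^2 * b^2) / (2 * s0^4)"
  proof -
    have pi: "a^2 * b^2 = (s0^4 + (a^2 + b^2) * s0^2)/3" using cr by algebra
    have "3 * ((s0^4 + (a^2 + b^2) * s0^2)/3) / (2 * s0^4) = 1/2 + (a^2 + b^2) / (2 * s0^2)"
      using s0 by (simp add: field_simps power4_eq_xxxx power2_eq_square)
    thus ?thesis unfolding pi by simp
  qed
  show ?thesis using dT dC eq by auto
qed




lemma sq_less_iff: "(x::real) \<ge> 0 \<Longrightarrow> y \<ge> 0 \<Longrightarrow> x^2 < y^2 \<longleftrightarrow> x < y"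
  by (metis power_less_imp_less_base power_strict_mono zero_less_numeral)

theorem proposition2:
  fixes a b lam :: real
  assumes "a > b" and "b > 0" and "lam \<ge> 0"
  shows "(lam^4 < Lambda a b \<longrightarrow>
            D_T a b lam \<inter> D_C a b lam = CommonSys a b lam \<and> card (CommonSys a b lam) = 2)
       \<and> (lam^4 = Lambda a b \<longrightarrow>
            (\<exists>s0 h0. D_T a b lam \<inter> D_C a b lam = {(s0, h0)} \<and> CommonSys a b lam = {(s0, h0)} \<and>
               (\<exists>d. (hT a b lam has_real_derivative d) (at s0) \<and>
                    (hC a b lam has_real_derivative d) (at s0))))
       \<and> (lam^4 > Lambda a b \<longrightarrow> D_T a b lam \<inter> D_C a b lam = {})"
proof -
  interpret ab_setup a b using assms by unfold_locales auto
  define M where "M = psi a b sc"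
  define c where "c = 2 * lam^2"
  have M0: "M > 0" unfolding M_def by (rule M_pos)
  have c0: "c \<ge> 0" unfolding c_def by simp
  have LM: "Lambda a b = M^2/4" unfolding M_def by (rule Lambda_eq)
  have DD: "D_T a b lam \<inter> D_C a b lam = CommonSys a b lam" using DD_eq assms by simp
  have l4: "lam^4 = c^2/4" unfolding c_def by (simp add: power_mult_distrib flip: power_mult)
  have lt_iff: "lam^4 < Lambda a b \<longleftrightarrow> c < M"
    unfolding l4 LM using sq_less_iff[OF c0] M0 by simp
  have gt_iff: "lam^4 > Lambda a b \<longleftrightarrow> M < c"
    unfolding l4 LM using sq_less_iff[OF _ c0] M0 by simp
  have eq_iff: "lam^4 = Lambda a b \<longleftrightarrow> c = M"
    using lt_iff gt_iff by (metis linorder_neqE_linordered_idom not_less_iff_gr_or_eq)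
  have CS: "CommonSys a b lam = (\<lambda>s. (s, Hf a b lam s)) ` {s. s > 0 \<and> psi a b s = c}"
    unfolding c_def by (rule CommonSys_alt)
  have bsa: "b < sc" "sc < a" using b_sc_a by auto
  have psi_le: "psi a b s \<le> M" if "s > 0" for s
    using psi_max[of s] that unfolding M_def by (cases "s = sc") auto
  have P1: "lam^4 < Lambda a b \<longrightarrow>
            D_T a b lam \<inter> D_C a b lam = CommonSys a b lam \<and> card (CommonSys a b lam) = 2"
  proof
    assume "lam^4 < Lambda a b"
    hence cM: "c < M" using lt_iff by simp
    obtain s1 where s1: "b \<le> s1" "s1 \<le> sc" "psi a b s1 = c"
      using IVT'[of "psi a b" b c sc] psi_b c0 cM psi_cont[of b sc] assms bsa unfolding M_def by auto
    obtain s2 where s2: "sc \<le> s2" "s2 \<le> a" "psi a b s2 = c"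
      using IVT2'[where f="psi a b" and a=sc and b=a and y=c] psi_a c0 cM psi_cont[of sc a] sc_pos bsa
      unfolding M_def by auto
    have s1sc: "s1 < sc" using s1 cM unfolding M_def by (cases "s1 = sc") auto
    have s2sc: "sc < s2" using s2 cM unfolding M_def by (cases "s2 = sc") auto
    have s1p: "s1 > 0" using s1 assms by simp
    have S: "{s. s > 0 \<and> psi a b s = c} = {s1, s2}"
    proof (intro equalityI subsetI)
      fix s assume "s \<in> {s. s > 0 \<and> psi a b s = c}"
      hence s: "s > 0" "psi a b s = c" by auto
      show "s \<in> {s1, s2}"
      proof (cases "s \<le> sc")
        case True
        hence "s = s1" using psi_inj_left[of s s1] s s1 s1p s1sc by simp
        thus ?thesis by simp
      next
        case False
        hence "s = s2" using psi_inj_right[of s s2] s s2 by simp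
        thus ?thesis by simp
      qed
    next
      fix s assume "s \<in> {s1, s2}"
      thus "s \<in> {s. s > 0 \<and> psi a b s = c}" using s1 s2 s1p sc_pos by auto
    qed
    have "CommonSys a b lam = {(s1, Hf a b lam s1), (s2, Hf a b lam s2)}" unfolding CS S by simp
    moreover have "s1 \<noteq> s2" using s1sc s2sc by simp
    ultimately have "card (CommonSys a b lam) = 2" by simp
    thus "D_T a b lam \<inter> D_C a b lam = CommonSys a b lam \<and> card (CommonSys a b lam) = 2" using DD by simp
  qed
  have P2: "lam^4 = Lambda a b \<longrightarrow>
            (\<exists>s0 h0. D_T a b lam \<inter> D_C a b lam = {(s0, h0)} \<and> CommonSys a b lam = {(s0, h0)} \<and>
               (\<exists>d. (hT a b lam has_real_derivative d) (at s0) \<and>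
                    (hC a b lam has_real_derivative d) (at s0)))"
  proof
    assume "lam^4 = Lambda a b"
    hence cM: "c = M" using eq_iff by simp
    have S: "{s. s > 0 \<and> psi a b s = c} = {sc}"
    proof (intro equalityI subsetI)
      fix s assume "s \<in> {s. s > 0 \<and> psi a b s = c}"
      hence s: "s > 0" "psi a b s = c" by auto
      show "s \<in> {sc}" using psi_max[of s] s cM unfolding M_def by (cases "s = sc") auto
    next
      fix s assume "s \<in> {sc}"
      thus "s \<in> {s. s > 0 \<and> psi a b s = c}" using cM sc_pos unfolding M_def by auto
    qed
    have CS1: "CommonSys a b lam = {(sc, Hf a b lam sc)}" unfolding CS S by simp
    have cr: "sc^2 * ((a^2 + b^2) + sc^2) = 3 * (a^2 * b^2)"
      using xc_eq unfolding sc_sq sg_def pp_def .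
    show "\<exists>s0 h0. D_T a b lam \<inter> D_C a b lam = {(s0, h0)} \<and> CommonSys a b lam = {(s0, h0)} \<and>
               (\<exists>d. (hT a b lam has_real_derivative d) (at s0) \<and>
                    (hC a b lam has_real_derivative d) (at s0))"
      using CS1 DD tangency[OF sc_pos cr] by auto
  qed
  have P3: "lam^4 > Lambda a b \<longrightarrow> D_T a b lam \<inter> D_C a b lam = {}"
  proof
    assume "lam^4 > Lambda a b"
    hence cM: "M < c" using gt_iff by simp
    have "{s. s > 0 \<and> psi a b s = c} = {}" using psi_le cM by force
    thus "D_T a b lam \<inter> D_C a b lam = {}" unfolding DD CS by simp
  qed
  show ?thesis using P1 P2 P3 by blast
qed


end
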